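(* For every integer $d\ge 2$, $$2^{-d}+\frac{(2^d-1)\left(2^d-2+\sqrt{(2^d-2)^2+2^{d+3}d}\right)}{2^{2d+1}d}>\frac{3}{2^d+2}.$$ *)

theory Defs
  imports Complex_Main
begin

end

theory Submission
  imports Defs
begin

lemma key:
  fixes N d :: real
  assumes N4: "N \<ge> 4" and dN: "d < N + 2" and d0: "d > 0"
  shows "(N - 2 + sqrt ((N - 2)\<^sup>2 + 8 * N * d)) * (N + 2) > 4 * N * d"
proof -
  define S where "S = sqrt ((N - 2)\<^sup>2 + 8 * N * d)"
  define t where "t = 4 * N * d / (N + 2) - (N - 2)"
  have S0: "S \<ge> 0" unfolding S_def using N4 d0 by simp
  have iden: "(N - 2)\<^sup>2 + 8 * N * d - t\<^sup>2 = 16 * N^2 * d * (N + 2 - d) / (N + 2)^2"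
  proof -
    have nz: "N + 2 \<noteq> 0" using N4 by simp
    have "t = (4 * N * d - (N - 2) * (N + 2)) / (N + 2)" unfolding t_def using nz by (simp add: field_simps)
    hence "t\<^sup>2 = (4 * N * d - (N - 2) * (N + 2))\<^sup>2 / (N + 2)\<^sup>2" by (simp add: power_divide)
    thus ?thesis using nz by (simp add: divide_simps) (simp add: power2_eq_square algebra_simps)
  qed
  have "16 * N^2 * d * (N + 2 - d) / (N + 2)^2 > 0" using N4 dN d0 by simp
  hence "t\<^sup>2 < (N - 2)\<^sup>2 + 8 * N * d" using iden by linarith
  hence "t < S" unfolding S_def by (rule real_less_rsqrt)
  hence "4 * N * d / (N + 2) < N - 2 + S" unfolding t_def by linarith
  hence "4 * N * d < (N - 2 + S) * (N + 2)" using N4 by (simp add: field_simps)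
  thus ?thesis unfolding S_def .
qed

theorem proposition2:
  fixes d :: nat
  assumes "d \<ge> 2"
  shows "1 / 2 ^ d + (2 ^ d - 1) * (2 ^ d - 2 + sqrt ((2 ^ d - 2)\<^sup>2 + 2 ^ (d + 3) * real d))
           / (2 ^ (2 * d + 1) * real d) > 3 / (2 ^ d + (2::real))"
proof -
  define N :: real where "N = 2 ^ d"
  have N4: "N \<ge> 4" unfolding N_def using assms
    by (metis power_increasing numeral_le_iff semiring_norm(69) power2_eq_square one_le_numeral
        mult_2 numeral_Bit0 power_numeral_reduce) 
  have "d < 2 ^ d" by (rule less_exp)
  hence dN: "real d < N" unfolding N_def by (metis of_nat_less_iff of_nat_numeral of_nat_power)
  have d0: "real d > 0" using assms by simp
  have e1: "(2::real) ^ (d + 3) = 8 * N" unfolding N_def by (simp add: power_add)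
  have e2: "(2::real) ^ (2 * d + 1) = 2 * N^2" unfolding N_def by (simp add: power_mult power_add mult.commute power_mult_distrib)
  define S where "S = sqrt ((N - 2)\<^sup>2 + 8 * N * real d)"
  have K: "(N - 2 + S) * (N + 2) > 4 * N * real d" unfolding S_def
    by (rule key[OF N4 _ d0]) (use dN in linarith)
  have goal: "1 / N + (N - 1) * (N - 2 + S) / (2 * N^2 * real d) > 3 / (N + 2)"
  proof -
    have "3 / (N + 2) - 1 / N = 2 * (N - 1) / (N * (N + 2))" using N4 by (simp add: field_simps)
    also have "\<dots> < (N - 1) * (N - 2 + S) / (2 * N^2 * real d)"
    proof -
      have "2 * (N - 1) * (2 * N^2 * real d) < (N - 1) * (N - 2 + S) * (N * (N + 2))"
      proof -
        have "N * (N - 1) * (4 * N * real d) < N * (N - 1) * ((N - 2 + S) * (N + 2))"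
          using K N4 by (intro mult_strict_left_mono) auto
        thus ?thesis by (simp add: algebra_simps power2_eq_square)
      qed
      thus ?thesis using N4 d0 by (simp add: divide_simps)
    qed
    finally show ?thesis by linarith
  qed
  show ?thesis using goal unfolding S_def N_def e1[unfolded N_def] e2[unfolded N_def] by (simp add: mult.assoc)
qed

end
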